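(* Let $\mathscr{F}$ be a family of languages closed under union, product, Kleene closure and rational transductions. Let $S$ be a semigroup, $\sigma : X^+ \to S$ a choice of generators for $S$, $S^0$ the semigroup $S$ with a new zero $0$ adjoined, $Y = X \cup \{z\}$ for a new letter $z$, and $\tau : Y^+ \to S^0$ the extension of $\sigma$ with $z\tau = 0$. Then $L_\sigma(S) \in \mathscr{F}$ if and only if $L_\tau(S^0) \in \mathscr{F}$.
   Context: For a semigroup $S$, $S^1$ denotes the monoid obtained by adjoining a new identity $1$ (even if $S$ already has one). A choice of generators for $S$ is a surjective morphism $\sigma : X^+ \to S$ from a free semigroup; it extends uniquely to $\sigma^1 : X^* \to S^1$. Let $\overline{X} = \{\overline{x} : x \in X\}$ be a set of formal inverses, $\hat{X} = X \cup \overline{X}$. The loop automaton of $S$ with respect to $\sigma$ is the directed labelled graph with vertex set $S^1$, having for each $a \in S^1$ and $x \in X$ an edge from $a$ to $a(x\sigma)$ labelled $x$ and an edge from $a(x\sigma)$ to $a$ labelled $\overline{x}$. The loop problem $L_\sigma(S) \subseteq \hat{X}^*$ is the set of words labelling paths from $1$ to $1$ in this graph (including the empty word). A rational transduction is a relation between free monoids realised by a finite-state transducer; the image of a language under it is the set of outputs paired with inputs from the language. *)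

theory Defs
  imports Main
begin

text \<open>All alphabets are finite subsets of a universal letter type nat.
A word over the doubled alphabet hat X is encoded as a nat list: the letter x is
encoded as 2*x and its formal inverse xbar as 2*x+1.\<close>

definition pos_letter :: "nat \<Rightarrow> nat" where "pos_letter x = 2 * x"
definition inv_letter :: "nat \<Rightarrow> nat" where "inv_letter x = 2 * x + 1"

text \<open>Multiplication of S^1, where S has multiplication m and None is the adjoined identity.\<close>
fun mult1 :: "('t \<Rightarrow> 't \<Rightarrow> 't) \<Rightarrow> 't option \<Rightarrow> 't option \<Rightarrow> 't option" where
  "mult1 m None b = b"
| "mult1 m (Some a) None = Some a"
| "mult1 m (Some a) (Some b) = Some (m a b)"

text \<open>Multiplication of S^0: the semigroup S with a new zero None adjoined.\<close>
fun mult0 :: "'s::semigroup_mult option \<Rightarrow> 's option \<Rightarrow> 's option" where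
  "mult0 (Some a) (Some b) = Some (a * b)"
| "mult0 _ _ = None"

fun word_val :: "('t \<Rightarrow> 't \<Rightarrow> 't) \<Rightarrow> (nat \<Rightarrow> 't) \<Rightarrow> nat list \<Rightarrow> 't" where
  "word_val m g [x] = g x"
| "word_val m g (x # y # ys) = m (g x) (word_val m g (y # ys))"
| "word_val m g [] = undefined"

definition choice_of_generators :: "('t \<Rightarrow> 't \<Rightarrow> 't) \<Rightarrow> nat set \<Rightarrow> (nat \<Rightarrow> 't) \<Rightarrow> bool" where
  "choice_of_generators m X g \<longleftrightarrow>
     (\<forall>s. \<exists>w. w \<noteq> [] \<and> set w \<subseteq> X \<and> word_val m g w = s)"

text \<open>Paths in the loop automaton (vertex set S^1).\<close>
inductive loop_path :: "('t \<Rightarrow> 't \<Rightarrow> 't) \<Rightarrow> nat set \<Rightarrow> (nat \<Rightarrow> 't)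
    \<Rightarrow> 't option \<Rightarrow> nat list \<Rightarrow> 't option \<Rightarrow> bool"
  for m X g where
  nil: "loop_path m X g a [] a"
| fwd: "x \<in> X \<Longrightarrow> loop_path m X g (mult1 m a (Some (g x))) w c
        \<Longrightarrow> loop_path m X g a (pos_letter x # w) c"
| bwd: "x \<in> X \<Longrightarrow> loop_path m X g a w c
        \<Longrightarrow> loop_path m X g (mult1 m a (Some (g x))) (inv_letter x # w) c"

definition loop_problem :: "('t \<Rightarrow> 't \<Rightarrow> 't) \<Rightarrow> nat set \<Rightarrow> (nat \<Rightarrow> 't) \<Rightarrow> nat list set" where
  "loop_problem m X g = {w. loop_path m X g None w None}"

inductive trans_run :: "(nat \<times> nat list \<times> nat list \<times> nat) set
    \<Rightarrow> nat \<Rightarrow> nat list \<Rightarrow> nat list \<Rightarrow> nat \<Rightarrow> bool" for \<Delta> where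
  nil: "trans_run \<Delta> p [] [] p"
| step: "(p, u, v, q) \<in> \<Delta> \<Longrightarrow> trans_run \<Delta> q u' v' r
         \<Longrightarrow> trans_run \<Delta> p (u @ u') (v @ v') r"

definition transduce :: "(nat \<times> nat list \<times> nat list \<times> nat) set \<Rightarrow> nat \<Rightarrow> nat set
    \<Rightarrow> nat list set \<Rightarrow> nat list set" where
  "transduce \<Delta> q0 Fin L = {v. \<exists>u\<in>L. \<exists>q\<in>Fin. trans_run \<Delta> q0 u v q}"

definition lang_prod :: "nat list set \<Rightarrow> nat list set \<Rightarrow> nat list set" where
  "lang_prod A B = {u @ v | u v. u \<in> A \<and> v \<in> B}"

inductive_set kleene_star :: "nat list set \<Rightarrow> nat list set" for A where
  emp: "[] \<in> kleene_star A"
| app: "u \<in> A \<Longrightarrow> v \<in> kleene_star A \<Longrightarrow> u @ v \<in> kleene_star A"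

definition closed_family :: "(nat list set \<Rightarrow> bool) \<Rightarrow> bool" where
  "closed_family \<F> \<longleftrightarrow>
     (\<forall>A B. \<F> A \<longrightarrow> \<F> B \<longrightarrow> \<F> (A \<union> B)) \<and>
     (\<forall>A B. \<F> A \<longrightarrow> \<F> B \<longrightarrow> \<F> (lang_prod A B)) \<and>
     (\<forall>A. \<F> A \<longrightarrow> \<F> (kleene_star A)) \<and>
     (\<forall>\<Delta> q0 Fin A. finite \<Delta> \<longrightarrow> finite Fin \<longrightarrow> \<F> A \<longrightarrow> \<F> (transduce \<Delta> q0 Fin A))"

end

theory Submission
  imports Defs
begin

definition hat :: "nat set \<Rightarrow> nat set" where
  "hat X = pos_letter ` X \<union> inv_letter ` X"

lemma pos_neq_inv[simp]: "pos_letter x \<noteq> inv_letter y" "inv_letter y \<noteq> pos_letter x"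
  by (simp_all add: pos_letter_def inv_letter_def) presburger+

lemma pos_inj[simp]: "pos_letter x = pos_letter y \<longleftrightarrow> x = y"
  by (simp add: pos_letter_def)

lemma inv_inj[simp]: "inv_letter x = inv_letter y \<longleftrightarrow> x = y"
  by (simp add: inv_letter_def)

lemma pos_in_hat[simp]: "pos_letter x \<in> hat X \<longleftrightarrow> x \<in> X"
  unfolding hat_def by auto

lemma inv_in_hat[simp]: "inv_letter x \<in> hat X \<longleftrightarrow> x \<in> X"
  unfolding hat_def by auto

lemma hat_insert: "hat (insert z X) = insert (pos_letter z) (insert (inv_letter z) (hat X))"
  unfolding hat_def by auto

lemma hat_finite: "finite X \<Longrightarrow> finite (hat X)"
  unfolding hat_def by auto

lemma path_letters: "loop_path m X g a w c \<Longrightarrow> set w \<subseteq> hat X"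
  by (induction rule: loop_path.induct) auto

lemma path_append1:
  "loop_path m X g a u b \<Longrightarrow> loop_path m X g b v c \<Longrightarrow> loop_path m X g a (u @ v) c"
  by (induction rule: loop_path.induct) (auto intro: loop_path.intros)

lemma path_append2:
  "loop_path m X g a (u @ v) c \<Longrightarrow> \<exists>b. loop_path m X g a u b \<and> loop_path m X g b v c"
proof (induction u arbitrary: a)
  case Nil
  then show ?case by (auto intro: loop_path.nil)
next
  case (Cons x u)
  from Cons.prems have "loop_path m X g a (x # (u @ v)) c" by simp
  then consider (F) y where "x = pos_letter y" "y \<in> X" "loop_path m X g (mult1 m a (Some (g y))) (u @ v) c"
    | (B) y a0 where "x = inv_letter y" "y \<in> X" "a = mult1 m a0 (Some (g y))" "loop_path m X g a0 (u @ v) c"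
    by (cases rule: loop_path.cases) auto
  then show ?case
  proof cases
    case F
    then obtain b where "loop_path m X g (mult1 m a (Some (g y))) u b" "loop_path m X g b v c"
      using Cons.IH by blast
    then show ?thesis using F by (auto intro: loop_path.fwd)
  next
    case B
    then obtain b where "loop_path m X g a0 u b" "loop_path m X g b v c"
      using Cons.IH by blast
    then show ?thesis using B by (auto intro: loop_path.bwd)
  qed
qed

lemma inv_step: "loop_path m Y g a [inv_letter x] c \<Longrightarrow> a = mult1 m c (Some (g x))"
  by (auto elim!: loop_path.cases)

lemma pos_step: "loop_path m Y g a [pos_letter x] c \<Longrightarrow> c = mult1 m a (Some (g x))"
  by (auto elim!: loop_path.cases)

lemma mult1_assoc:
  "mult1 (*) (mult1 (*) a (Some (x::'s::semigroup_mult))) (Some y) = mult1 (*) a (Some (x * y))"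
  by (cases a) (simp_all add: mult.assoc)

lemma wv_path:
  fixes \<sigma> :: "nat \<Rightarrow> 's::semigroup_mult"
  shows "w \<noteq> [] \<Longrightarrow> set w \<subseteq> X \<Longrightarrow>
    loop_path (*) X \<sigma> a (map pos_letter w) (mult1 (*) a (Some (word_val (*) \<sigma> w)))"
proof (induction w arbitrary: a)
  case Nil then show ?case by simp
next
  case (Cons x w)
  show ?case
  proof (cases w)
    case Nil
    then show ?thesis using Cons.prems by (auto intro: loop_path.intros)
  next
    case (Cons y ys)
    have "loop_path (*) X \<sigma> (mult1 (*) a (Some (\<sigma> x))) (map pos_letter w)
       (mult1 (*) (mult1 (*) a (Some (\<sigma> x))) (Some (word_val (*) \<sigma> w)))"
      using Cons.IH Cons.prems Cons by auto
    then show ?thesis using Cons Cons.prems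
      by (auto simp: mult1_assoc intro: loop_path.fwd)
  qed
qed

lemma wv_back:
  fixes \<sigma> :: "nat \<Rightarrow> 's::semigroup_mult"
  shows "w \<noteq> [] \<Longrightarrow> set w \<subseteq> X \<Longrightarrow>
    loop_path (*) X \<sigma> (mult1 (*) a (Some (word_val (*) \<sigma> w))) (map inv_letter (rev w)) a"
proof (induction w arbitrary: a)
  case Nil then show ?case by simp
next
  case (Cons x w)
  have step: "loop_path (*) X \<sigma> (mult1 (*) a (Some (\<sigma> x))) [inv_letter x] a"
    using Cons.prems by (auto intro: loop_path.intros)
  show ?case
  proof (cases w)
    case Nil
    then show ?thesis using step by simp
  next
    case (Cons y ys)
    have "loop_path (*) X \<sigma> (mult1 (*) (mult1 (*) a (Some (\<sigma> x))) (Some (word_val (*) \<sigma> w)))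
        (map inv_letter (rev w)) (mult1 (*) a (Some (\<sigma> x)))"
      using Cons.IH Cons.prems Cons by auto
    from path_append1[OF this step] show ?thesis using Cons
      by (simp add: mult1_assoc)
  qed
qed

lemma reach:
  fixes \<sigma> :: "nat \<Rightarrow> 's::semigroup_mult"
  assumes "choice_of_generators (*) X \<sigma>"
  shows "\<exists>u. loop_path (*) X \<sigma> None u b" "\<exists>u. loop_path (*) X \<sigma> b u None"
proof -
  have "(\<exists>u. loop_path (*) X \<sigma> None u b) \<and> (\<exists>u. loop_path (*) X \<sigma> b u None)"
  proof (cases b)
    case None
    then show ?thesis by (auto intro: loop_path.nil)
  next
    case (Some s)
    obtain w where w: "w \<noteq> []" "set w \<subseteq> X" "word_val (*) \<sigma> w = s"
      using assms unfolding choice_of_generators_def by blast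
    show ?thesis
      using wv_path[OF w(1,2), of \<sigma> None] wv_back[OF w(1,2), of \<sigma> None] w(3) Some by auto
  qed
  then show "\<exists>u. loop_path (*) X \<sigma> None u b" "\<exists>u. loop_path (*) X \<sigma> b u None" by auto
qed

lemma mult1_embed:
  "mult1 mult0 (map_option Some a) (Some (Some s)) = map_option Some (mult1 (*) a (Some (s::'s::semigroup_mult)))"
  by (cases a) auto

lemma mult1_zero: "mult1 mult0 a (Some None) = Some (None :: 's::semigroup_mult option)"
  by (cases a) auto

lemma mult1_back:
  assumes "mult1 mult0 b (Some (Some s)) = map_option Some a"
  shows "\<exists>b0. b = map_option Some b0 \<and> a = mult1 (*) b0 (Some (s::'s::semigroup_mult))"
proof (cases b)
  case None
  then show ?thesis using assms by (intro exI[of _ None]) (cases a; auto)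
next
  case (Some t)
  show ?thesis
  proof (cases t)
    case None
    then show ?thesis using Some assms by (cases a) auto
  next
    case (Some t')
    then show ?thesis using \<open>b = Some t\<close> assms by (intro exI[of _ "Some t'"]) (cases a; auto)
  qed
qed

lemma mult1_zero_back:
  "mult1 mult0 b (Some (Some s)) = Some (None :: 's::semigroup_mult option) \<Longrightarrow> b = Some None"
  apply (cases b)
   apply auto
  subgoal for t by (cases t; auto)
  done

lemma not_zero_embed: "b \<noteq> Some None \<Longrightarrow> \<exists>a. b = map_option Some a"
proof (cases b)
  case None
  then show ?thesis by (intro exI[of _ None]) simp
next
  case (Some t)
  assume "b \<noteq> Some None"
  then obtain t' where "t = Some t'" using Some by (cases t) auto
  then show ?thesis using Some by (intro exI[of _ "Some t'"]) simp
qed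

context
  fixes X :: "nat set" and \<sigma> :: "nat \<Rightarrow> 's::semigroup_mult" and z :: nat
  assumes zX: "z \<notin> X"
begin

abbreviation \<tau> where "\<tau> \<equiv> (\<lambda>y. if y = z then None else Some (\<sigma> y))"

lemma embed:
  "loop_path (*) X \<sigma> a w c \<Longrightarrow>
   loop_path mult0 (insert z X) \<tau> (map_option Some a) w (map_option Some c)"
proof (induction rule: loop_path.induct)
  case (nil a)
  then show ?case by (rule loop_path.nil)
next
  case (fwd x a w c)
  then have "x \<noteq> z" using zX by auto
  then show ?case using fwd
    by (auto intro!: loop_path.fwd simp: mult1_embed)
next
  case (bwd x a w c)
  then have "x \<noteq> z" using zX by auto
  have "loop_path mult0 (insert z X) \<tau> (mult1 mult0 (map_option Some a) (Some (\<tau> x)))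
     (inv_letter x # w) (map_option Some c)"
    using bwd by (intro loop_path.bwd) auto
  then show ?case using \<open>x \<noteq> z\<close> by (simp add: mult1_embed)
qed

lemma restrict:
  "loop_path mult0 (insert z X) \<tau> a' w c' \<Longrightarrow> set w \<subseteq> hat X \<Longrightarrow> a' = map_option Some a \<Longrightarrow>
   \<exists>c. c' = map_option Some c \<and> loop_path (*) X \<sigma> a w c"
proof (induction arbitrary: a rule: loop_path.induct)
  case (nil a')
  then show ?case by (auto intro: loop_path.nil)
next
  case (fwd x a' w c')
  then have x: "x \<in> X" "x \<noteq> z" using zX by auto
  then have "mult1 mult0 a' (Some (\<tau> x)) = map_option Some (mult1 (*) a (Some (\<sigma> x)))"
    using fwd.prems by (simp add: mult1_embed)
  then obtain c where "c' = map_option Some c" "loop_path (*) X \<sigma> (mult1 (*) a (Some (\<sigma> x))) w c"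
    using fwd by auto
  then show ?case using x by (auto intro: loop_path.fwd)
next
  case (bwd x a' w c')
  then have x: "x \<in> X" "x \<noteq> z" using zX by auto
  then obtain b0 where b0: "a' = map_option Some b0" "a = mult1 (*) b0 (Some (\<sigma> x))"
    using mult1_back[of a' "\<sigma> x" a] bwd.prems by auto
  then obtain c where "c' = map_option Some c" "loop_path (*) X \<sigma> b0 w c"
    using bwd by auto
  then show ?case using x b0 by (auto intro: loop_path.bwd)
qed

lemma zero_stays:
  "loop_path mult0 (insert z X) \<tau> a' w c' \<Longrightarrow> set w \<subseteq> hat X \<Longrightarrow> a' = Some None \<Longrightarrow> c' = Some None"
proof (induction rule: loop_path.induct)
  case (nil a)
  then show ?case by simp
next
  case (fwd x a w c)
  then have x: "x \<in> X" "x \<noteq> z" using zX by auto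
  then show ?case using fwd by auto
next
  case (bwd x a w c)
  then have x: "x \<in> X" "x \<noteq> z" using zX by auto
  then have "a = Some None" using bwd.prems mult1_zero_back[of a "\<sigma> x"] by auto
  then show ?case using bwd by auto
qed

lemma zero_mid:
  "set w \<subseteq> hat (insert z X) \<Longrightarrow> loop_path mult0 (insert z X) \<tau> (Some None) w (Some None)"
proof (induction w)
  case Nil
  show ?case by (rule loop_path.nil)
next
  case (Cons c w)
  then have w: "loop_path mult0 (insert z X) \<tau> (Some None) w (Some None)" by auto
  from Cons.prems obtain y where y: "y \<in> insert z X" "c = pos_letter y \<or> c = inv_letter y"
    unfolding hat_def by auto
  have eq: "mult1 mult0 (Some None) (Some (\<tau> y)) = Some None" by simp
  show ?case
  proof (cases "c = pos_letter y")
    case True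
    have "loop_path mult0 (insert z X) \<tau> (mult1 mult0 (Some None) (Some (\<tau> y))) w (Some None)"
      using w eq by simp
    from loop_path.fwd[OF y(1) this] show ?thesis using True by simp
  next
    case False
    then have "c = inv_letter y" using y by auto
    then show ?thesis using loop_path.bwd[OF y(1) w] eq
      by auto
  qed
qed

lemma start_lemma:
  assumes "loop_path mult0 (insert z X) \<tau> None (u @ c # r) e" "set u \<subseteq> hat X"
    "c = pos_letter z \<or> c = inv_letter z"
  shows "c = pos_letter z \<and> (\<exists>b. loop_path (*) X \<sigma> None u b)"
proof -
  obtain b' where p1: "loop_path mult0 (insert z X) \<tau> None u b'"
    and p2: "loop_path mult0 (insert z X) \<tau> b' ([c] @ r) e"
    using path_append2[of mult0 "insert z X" \<tau> None u "c # r" e] assms(1) by auto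
  obtain b'' where p3: "loop_path mult0 (insert z X) \<tau> b' [c] b''"
    using path_append2[OF p2] by auto
  obtain b where b: "b' = map_option Some b" "loop_path (*) X \<sigma> None u b"
    using restrict[OF p1 assms(2), of None] by auto
  have "c \<noteq> inv_letter z"
  proof
    assume "c = inv_letter z"
    then have "b' = Some None" using inv_step[of mult0 _ \<tau> b' z b''] p3 mult1_zero by auto
    then show False using b(1) by (cases b) auto
  qed
  then show ?thesis using assms(3) b by auto
qed

lemma end_lemma:
  assumes "loop_path mult0 (insert z X) \<tau> e (r @ c # v) None" "set v \<subseteq> hat X"
    "c = pos_letter z \<or> c = inv_letter z"
  shows "c = inv_letter z \<and> (\<exists>b. loop_path (*) X \<sigma> b v None)"
proof -
  obtain d'' where p1: "loop_path mult0 (insert z X) \<tau> d'' ([c] @ v) None"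
    using path_append2[of mult0 "insert z X" \<tau> e r "c # v" None] assms(1) by auto
  obtain d' where p2: "loop_path mult0 (insert z X) \<tau> d'' [c] d'"
    and p3: "loop_path mult0 (insert z X) \<tau> d' v None"
    using path_append2[OF p1] by auto
  have "d' \<noteq> Some None" using zero_stays[OF p3 assms(2)] by auto
  then obtain d where d: "d' = map_option Some d" using not_zero_embed by auto
  obtain c0 where "None = map_option Some c0" "loop_path (*) X \<sigma> d v c0"
    using restrict[OF p3 assms(2) d] by auto
  then have b: "loop_path (*) X \<sigma> d v None" by auto
  have "c \<noteq> pos_letter z"
  proof
    assume "c = pos_letter z"
    then have "d' = Some None" using pos_step[of mult0 _ \<tau> d'' z d'] p2 mult1_zero by auto
    then show False using \<open>d' \<noteq> Some None\<close> by auto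
  qed
  then show ?thesis using assms(3) b by auto
qed

end


definition tp :: "nat set \<Rightarrow> (nat \<Rightarrow> nat list) \<Rightarrow> nat list \<Rightarrow> (nat \<Rightarrow> nat list)
    \<Rightarrow> (nat \<times> nat list \<times> nat list \<times> nat) set" where
  "tp H f h g = (\<lambda>c. (0, [c], f c, 0)) ` H \<union> {(0, [], h, 1)} \<union> (\<lambda>c. (1, [c], g c, 1)) ` H"

lemma tp_finite: "finite H \<Longrightarrow> finite (tp H f h g)"
  unfolding tp_def by auto

lemma tp_run:
  "trans_run (tp H f h g) p u v r \<Longrightarrow>
    (p = 1 \<longrightarrow> r = 1 \<and> set u \<subseteq> H \<and> v = concat (map g u)) \<and>
    (p = 0 \<and> r = 1 \<longrightarrow> (\<exists>u1 u2. u = u1 @ u2 \<and> set u \<subseteq> H \<and>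
        v = concat (map f u1) @ h @ concat (map g u2)))"
proof (induction rule: trans_run.induct)
  case (nil p)
  then show ?case by auto
next
  case (step p u v q u' v' r)
  from step.hyps(1) consider c where "c \<in> H" "p = 0" "u = [c]" "v = f c" "q = 0"
    | "p = 0" "u = []" "v = h" "q = 1"
    | c where "c \<in> H" "p = 1" "u = [c]" "v = g c" "q = 1"
    unfolding tp_def by auto
  then show ?case
  proof cases
    case 1
    have "\<exists>u1 u2. u @ u' = u1 @ u2 \<and> set (u @ u') \<subseteq> H \<and>
        v @ v' = concat (map f u1) @ h @ concat (map g u2)" if r1: "r = (1::nat)"
    proof -
      have "\<exists>u1 u2. u' = u1 @ u2 \<and> set u' \<subseteq> H \<and> v' = concat (map f u1) @ h @ concat (map g u2)"
        using step.IH 1 r1 by blast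
      then obtain u1 u2 where "u' = u1 @ u2" "set u' \<subseteq> H" "v' = concat (map f u1) @ h @ concat (map g u2)"
        by blast
      then show ?thesis
        using 1 by (intro exI[of _ "c # u1"] exI[of _ u2]) auto
    qed
    then show ?thesis using 1 by auto
  next
    case 2
    then show ?thesis using step.IH by (intro conjI impI; (intro exI[of _ "[]"] exI[of _ u'])?) auto
  next
    case 3
    then show ?thesis using step.IH by auto
  qed
qed

lemma run_cons: "(p, [c], v, q) \<in> \<Delta> \<Longrightarrow> trans_run \<Delta> q u' v' r \<Longrightarrow> trans_run \<Delta> p (c # u') (v @ v') r"
  by (metis append_Cons append_Nil trans_run.step)

lemma run_nil: "(p, [], v, q) \<in> \<Delta> \<Longrightarrow> trans_run \<Delta> q u' v' r \<Longrightarrow> trans_run \<Delta> p u' (v @ v') r"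
  by (metis append_Nil trans_run.step)

lemma tp_intro:
  assumes "set u1 \<subseteq> H" "set u2 \<subseteq> H"
  shows "trans_run (tp H f h g) 0 (u1 @ u2) (concat (map f u1) @ h @ concat (map g u2)) 1"
proof -
  have 1: "set u2 \<subseteq> H \<Longrightarrow> trans_run (tp H f h g) 1 u2 (concat (map g u2)) 1" for u2
  proof (induction u2)
    case Nil
    show ?case by (simp add: trans_run.nil)
  next
    case (Cons c u2)
    then show ?case by (auto intro!: run_cons simp: tp_def)
  qed
  have 2: "trans_run (tp H f h g) 0 u2 (h @ concat (map g u2)) 1"
    by (rule run_nil[OF _ 1[OF assms(2)]]) (simp add: tp_def)
  have "set u1 \<subseteq> H \<Longrightarrow> trans_run (tp H f h g) 0 (u1 @ u2) (concat (map f u1) @ h @ concat (map g u2)) 1"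
  proof (induction u1)
    case Nil
    then show ?case using 2 by simp
  next
    case (Cons c u1)
    then show ?case by (auto intro!: run_cons[where v = "f c", simplified append_assoc] simp: tp_def)
  qed
  then show ?thesis using assms(1) .
qed

lemma concat_single[simp]: "concat (map (\<lambda>c. [c]) u) = u"
  by (induction u) auto

lemma concat_empty[simp]: "concat (map (\<lambda>c. []) u) = []"
  by (induction u) auto

lemma transduce_id:
  "transduce (tp H (\<lambda>c. [c]) [] (\<lambda>c. [c])) 0 {1} L = {u \<in> L. set u \<subseteq> H}"
proof
  show "transduce (tp H (\<lambda>c. [c]) [] (\<lambda>c. [c])) 0 {1} L \<subseteq> {u \<in> L. set u \<subseteq> H}"
    unfolding transduce_def using tp_run[of H "\<lambda>c. [c]" "[]" "\<lambda>c. [c]" 0]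
    by (force simp: concat_single)
  show "{u \<in> L. set u \<subseteq> H} \<subseteq> transduce (tp H (\<lambda>c. [c]) [] (\<lambda>c. [c])) 0 {1} L"
  proof
    fix u assume u: "u \<in> {u \<in> L. set u \<subseteq> H}"
    then have "trans_run (tp H (\<lambda>c. [c]) [] (\<lambda>c. [c])) 0 (u @ []) (concat (map (\<lambda>c. [c]) u) @ [] @ concat (map (\<lambda>c. [c]) [])) 1"
      by (intro tp_intro) auto
    then show "u \<in> transduce (tp H (\<lambda>c. [c]) [] (\<lambda>c. [c])) 0 {1} L"
      using u unfolding transduce_def by (auto simp: concat_single)
  qed
qed

lemma transduce_pref:
  assumes "\<forall>w\<in>L. set w \<subseteq> H"
  shows "transduce (tp H (\<lambda>c. [c]) h (\<lambda>c. [])) 0 {1} L = {u @ h | u u2. u @ u2 \<in> L}"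
proof
  show "transduce (tp H (\<lambda>c. [c]) h (\<lambda>c. [])) 0 {1} L \<subseteq> {u @ h | u u2. u @ u2 \<in> L}"
    unfolding transduce_def using tp_run[of H "\<lambda>c. [c]" h "\<lambda>c. []" 0]
    by (force simp: concat_single)
  show "{u @ h | u u2. u @ u2 \<in> L} \<subseteq> transduce (tp H (\<lambda>c. [c]) h (\<lambda>c. [])) 0 {1} L"
  proof
    fix w assume "w \<in> {u @ h | u u2. u @ u2 \<in> L}"
    then obtain u u2 where "w = u @ h" "u @ u2 \<in> L" by auto
    note uu = this
    have "set (u @ u2) \<subseteq> H" using assms uu(2) by blast
    then have "set u \<subseteq> H" "set u2 \<subseteq> H" by auto
    note uu = uu this
    show "w \<in> transduce (tp H (\<lambda>c. [c]) h (\<lambda>c. [])) 0 {1} L"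
    proof -
      have "trans_run (tp H (\<lambda>c. [c]) h (\<lambda>c. [])) 0 (u @ u2) (u @ h) 1"
        using tp_intro[of u H u2 "\<lambda>c. [c]" h "\<lambda>c. []"] uu by (simp add: concat_single)
      then show ?thesis using uu unfolding transduce_def by blast
    qed
  qed
qed

lemma transduce_suff:
  assumes "\<forall>w\<in>L. set w \<subseteq> H"
  shows "transduce (tp H (\<lambda>c. []) h (\<lambda>c. [c])) 0 {1} L = {h @ v | v v1. v1 @ v \<in> L}"
proof
  show "transduce (tp H (\<lambda>c. []) h (\<lambda>c. [c])) 0 {1} L \<subseteq> {h @ v | v v1. v1 @ v \<in> L}"
    unfolding transduce_def using tp_run[of H "\<lambda>c. []" h "\<lambda>c. [c]" 0]
    by (force simp: concat_single)
  show "{h @ v | v v1. v1 @ v \<in> L} \<subseteq> transduce (tp H (\<lambda>c. []) h (\<lambda>c. [c])) 0 {1} L"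
  proof
    fix w assume "w \<in> {h @ v | v v1. v1 @ v \<in> L}"
    then obtain v v1 where "w = h @ v" "v1 @ v \<in> L" by auto
    note uu = this
    have "set (v1 @ v) \<subseteq> H" using assms uu(2) by blast
    then have "set v1 \<subseteq> H" "set v \<subseteq> H" by auto
    note uu = uu this
    show "w \<in> transduce (tp H (\<lambda>c. []) h (\<lambda>c. [c])) 0 {1} L"
    proof -
      have "trans_run (tp H (\<lambda>c. []) h (\<lambda>c. [c])) 0 (v1 @ v) (h @ v) 1"
        using tp_intro[of v1 H v "\<lambda>c. []" h "\<lambda>c. [c]"] uu by (simp add: concat_single)
      then show ?thesis using uu unfolding transduce_def by blast
    qed
  qed
qed

definition tB :: "nat set \<Rightarrow> (nat \<times> nat list \<times> nat list \<times> nat) set" where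
  "tB H = (\<lambda>d. (0, [], [d], 0)) ` H"

lemma tB_finite: "finite H \<Longrightarrow> finite (tB H)"
  unfolding tB_def by auto

lemma tB_run: "trans_run (tB H) p u v r \<Longrightarrow> set v \<subseteq> H"
  by (induction rule: trans_run.induct) (auto simp: tB_def)

lemma tB_intro: "set v \<subseteq> H \<Longrightarrow> trans_run (tB H) 0 [] v 0"
proof (induction v)
  case Nil
  show ?case by (rule trans_run.nil)
next
  case (Cons d v)
  then show ?case using run_nil[of 0 "[d]" 0 "tB H" "[]" v 0] by (auto simp: tB_def)
qed

lemma transduce_all:
  assumes "[] \<in> L"
  shows "transduce (tB H) 0 {0} L = {v. set v \<subseteq> H}"
  unfolding transduce_def using tB_run[of H 0] tB_intro[of _ H] assms by blast


context
  fixes X :: "nat set" and \<sigma> :: "nat \<Rightarrow> 's::semigroup_mult" and z :: nat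
  assumes zX: "z \<notin> X"
begin

lemma L_restrict:
  "loop_problem (*) X \<sigma> =
   {w \<in> loop_problem mult0 (insert z X) (\<lambda>y. if y = z then None else Some (\<sigma> y)). set w \<subseteq> hat X}"
proof
  show "loop_problem (*) X \<sigma> \<subseteq> {w \<in> loop_problem mult0 (insert z X) (\<lambda>y. if y = z then None else Some (\<sigma> y)). set w \<subseteq> hat X}"
  proof
    fix w assume "w \<in> loop_problem (*) X \<sigma>"
    then have p: "loop_path (*) X \<sigma> None w None" unfolding loop_problem_def by auto
    have "loop_path mult0 (insert z X) (\<lambda>y. if y = z then None else Some (\<sigma> y)) (map_option Some None) w (map_option Some None)"
      by (rule embed[OF zX p])
    then show "w \<in> {w \<in> loop_problem mult0 (insert z X) (\<lambda>y. if y = z then None else Some (\<sigma> y)). set w \<subseteq> hat X}"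
      using path_letters[OF p] unfolding loop_problem_def by simp
  qed
next
  show "{w \<in> loop_problem mult0 (insert z X) (\<lambda>y. if y = z then None else Some (\<sigma> y)). set w \<subseteq> hat X} \<subseteq> loop_problem (*) X \<sigma>"
  proof
    fix w assume w: "w \<in> {w \<in> loop_problem mult0 (insert z X) (\<lambda>y. if y = z then None else Some (\<sigma> y)). set w \<subseteq> hat X}"
    then obtain c where "None = map_option Some c" "loop_path (*) X \<sigma> None w c"
      using restrict[OF zX, where a=None and a'=None and w=w and c'=None] unfolding loop_problem_def by auto
    then show "w \<in> loop_problem (*) X \<sigma>" unfolding loop_problem_def by auto
  qed
qed

lemma L0_char:
  assumes gen: "choice_of_generators (*) X \<sigma>"
  shows "loop_problem mult0 (insert z X) (\<lambda>y. if y = z then None else Some (\<sigma> y)) =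
    loop_problem (*) X \<sigma> \<union>
    lang_prod {u @ [pos_letter z] | u u2. u @ u2 \<in> loop_problem (*) X \<sigma>}
      (lang_prod {v. set v \<subseteq> hat (insert z X)}
        {[inv_letter z] @ v | v v1. v1 @ v \<in> loop_problem (*) X \<sigma>})"
  (is "?LZ = ?RHS")
proof -
  let ?L = "loop_problem (*) X \<sigma>"
  let ?A = "{u @ [pos_letter z] | u u2. u @ u2 \<in> loop_problem (*) X \<sigma>}"
  let ?B = "{v. set v \<subseteq> hat (insert z X)}"
  let ?C = "{[inv_letter z] @ v | v v1. v1 @ v \<in> loop_problem (*) X \<sigma>}"
  have "?LZ = ?L \<union> lang_prod ?A (lang_prod ?B ?C)"
proof
  show "?LZ \<subseteq> ?L \<union> lang_prod ?A (lang_prod ?B ?C)"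
  proof
    fix w assume "w \<in> ?LZ"
    then have p: "loop_path mult0 (insert z X) (\<lambda>y. if y = z then None else Some (\<sigma> y)) None w None"
      unfolding loop_problem_def by auto
    have wY: "set w \<subseteq> hat (insert z X)" using path_letters[OF p] .
    show "w \<in> ?L \<union> lang_prod ?A (lang_prod ?B ?C)"
    proof (cases "set w \<subseteq> hat X")
      case True
      then show ?thesis using L_restrict \<open>w \<in> ?LZ\<close> by auto
    next
      case False
      then have "\<exists>x\<in>set w. x \<notin> hat X" by auto
      then obtain u c r where w: "w = u @ c # r" "c \<notin> hat X" "\<forall>y\<in>set u. y \<notin> (- hat X)"
        using split_list_first_prop[of w "\<lambda>x. x \<notin> hat X"] by auto
      have "c \<in> hat (insert z X)" using wY w(1) by auto
      then have cz: "c = pos_letter z \<or> c = inv_letter z" using w(2) hat_insert by simp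
      have u: "set u \<subseteq> hat X" using w(3) by auto
      from start_lemma[OF zX p[unfolded w] u cz] obtain b where
        c: "c = pos_letter z" and b: "loop_path (*) X \<sigma> None u b" by auto
      show ?thesis
      proof (cases "set r \<subseteq> hat X")
        case True
        have "c = inv_letter z" using end_lemma[OF zX p[unfolded w(1)] True cz] by blast
        then show ?thesis using c by simp
      next
        case False
        then have "\<exists>x\<in>set r. x \<notin> hat X" by auto
        then obtain mid c' v where r: "r = mid @ c' # v" "c' \<notin> hat X" "\<forall>y\<in>set v. y \<notin> (- hat X)"
          using split_list_last_prop[of r "\<lambda>x. x \<notin> hat X"] by auto
        have "c' \<in> hat (insert z X)" using wY w(1) r(1) by auto
        then have cz': "c' = pos_letter z \<or> c' = inv_letter z" using r(2) hat_insert by simp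
        have v: "set v \<subseteq> hat X" using r(3) by auto
        have p': "loop_path mult0 (insert z X) (\<lambda>y. if y = z then None else Some (\<sigma> y)) None ((u @ c # mid) @ c' # v) None"
          using p w r by simp
        from end_lemma[OF zX p' v cz'] obtain b2 where
          c': "c' = inv_letter z" and b2: "loop_path (*) X \<sigma> b2 v None" by auto
        obtain u2 where "loop_path (*) X \<sigma> b u2 None" using reach(2)[OF gen] by blast
        then have "u @ u2 \<in> ?L" using path_append1[OF b] unfolding loop_problem_def by auto
        then have A: "u @ [pos_letter z] \<in> ?A" by blast
        obtain v1 where "loop_path (*) X \<sigma> None v1 b2" using reach(1)[OF gen] by blast
        then have "v1 @ v \<in> ?L" using path_append1[OF _ b2] unfolding loop_problem_def by auto
        then have C: "[inv_letter z] @ v \<in> ?C" by blast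
        have "set mid \<subseteq> set w" using w(1) r(1) by auto
        then have B: "mid \<in> ?B" using wY by simp
        have "w = (u @ [pos_letter z]) @ (mid @ ([inv_letter z] @ v))" using w r c c' by simp
        then show ?thesis using A B C unfolding lang_prod_def by blast
      qed
    qed
  qed
next
  show "?L \<union> lang_prod ?A (lang_prod ?B ?C) \<subseteq> ?LZ"
  proof
    fix w assume "w \<in> ?L \<union> lang_prod ?A (lang_prod ?B ?C)"
    then consider "w \<in> ?L" | "w \<in> lang_prod ?A (lang_prod ?B ?C)" by blast
    then show "w \<in> ?LZ"
    proof cases
      case 1
      then show ?thesis unfolding L_restrict by blast
    next
      case 2
      then obtain a bc where abc: "w = a @ bc" "a \<in> ?A" "bc \<in> lang_prod ?B ?C"
        unfolding lang_prod_def by blast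
      then obtain mid c where mc: "bc = mid @ c" "mid \<in> ?B" "c \<in> ?C"
        unfolding lang_prod_def by blast
      obtain u u2 where uu: "a = u @ [pos_letter z]" "u @ u2 \<in> ?L" using abc(2) by blast
      obtain v v1 where vv: "c = [inv_letter z] @ v" "v1 @ v \<in> ?L" using mc(3) by blast
      have w: "w = (u @ [pos_letter z]) @ (mid @ ([inv_letter z] @ v))"
        using abc(1) mc(1) uu(1) vv(1) by simp
      have uL: "u @ u2 \<in> ?L" and mid: "set mid \<subseteq> hat (insert z X)" and vL: "v1 @ v \<in> ?L"
        using uu vv mc by auto
      have "loop_path (*) X \<sigma> None (u @ u2) None" using uL unfolding loop_problem_def by simp
      then obtain b where b: "loop_path (*) X \<sigma> None u b"
        using path_append2 by blast
      have "loop_path (*) X \<sigma> None (v1 @ v) None" using vL unfolding loop_problem_def by simp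
      then obtain b2 where b2: "loop_path (*) X \<sigma> b2 v None"
        using path_append2 by blast
      let ?P = "loop_path mult0 (insert z X) (\<lambda>y. if y = z then None else Some (\<sigma> y))"
      have e1: "?P None u (map_option Some b)" using embed[OF zX b] by simp
      have e2: "?P (map_option Some b2) v None" using embed[OF zX b2] by simp
      have m: "?P (Some None) mid (Some None)" using zero_mid[OF zX mid] .
      have s1: "?P (map_option Some b) [pos_letter z] (Some None)"
        using loop_path.fwd[of z "insert z X" mult0 "\<lambda>y. if y = z then None else Some (\<sigma> y)"
            "map_option Some b" "[]" "Some None"]
        by (simp add: mult1_zero loop_path.nil)
      have s2: "?P (Some None) [inv_letter z] (map_option Some b2)"
        using loop_path.bwd[of z "insert z X" mult0 "\<lambda>y. if y = z then None else Some (\<sigma> y)"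
            "map_option Some b2" "[]" "map_option Some b2"]
        by (simp add: mult1_zero loop_path.nil)
      have "?P None (u @ [pos_letter z] @ mid @ [inv_letter z] @ v) None"
        using path_append1[OF e1 path_append1[OF s1 path_append1[OF m path_append1[OF s2 e2]]]] .
      then have "?P None w None" unfolding w by (simp only: append_assoc append_Cons append_Nil)
      then show ?thesis unfolding loop_problem_def by auto
    qed
  qed
qed
  then show ?thesis .
qed

end

theorem theorem3p4:
  fixes \<F> :: "nat list set \<Rightarrow> bool"
    and X :: "nat set" and \<sigma> :: "nat \<Rightarrow> 's::semigroup_mult" and z :: nat
  assumes "closed_family \<F>"
    and "finite X"
    and "choice_of_generators (*) X \<sigma>"
    and "z \<notin> X"
  shows "\<F> (loop_problem (*) X \<sigma>) \<longleftrightarrow>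
         \<F> (loop_problem mult0 (insert z X) (\<lambda>y. if y = z then None else Some (\<sigma> y)))"
proof -
  let ?L = "loop_problem (*) X \<sigma>"
  let ?LZ = "loop_problem mult0 (insert z X) (\<lambda>y. if y = z then None else Some (\<sigma> y))"
  have un: "\<And>A B. \<F> A \<Longrightarrow> \<F> B \<Longrightarrow> \<F> (A \<union> B)"
    and pr: "\<And>A B. \<F> A \<Longrightarrow> \<F> B \<Longrightarrow> \<F> (lang_prod A B)"
    and tr: "\<And>\<Delta> q0 Fin A. finite \<Delta> \<Longrightarrow> finite Fin \<Longrightarrow> \<F> A \<Longrightarrow> \<F> (transduce \<Delta> q0 Fin A)"
    using assms(1) unfolding closed_family_def by simp_all
  have fX: "finite (hat X)" using hat_finite[OF assms(2)] .
  have fY: "finite (hat (insert z X))" using assms(2) by (intro hat_finite) simp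
  have Lletters: "\<forall>w\<in>?L. set w \<subseteq> hat X"
  proof
    fix w assume "w \<in> ?L"
    then have "loop_path (*) X \<sigma> None w None" unfolding loop_problem_def by simp
    then show "set w \<subseteq> hat X" by (rule path_letters)
  qed
  have Lnil: "[] \<in> ?L" unfolding loop_problem_def by (auto intro: loop_path.nil)
  show ?thesis
  proof
    assume FL: "\<F> ?L"
    have f1: "finite {1::nat}" by simp
    have "\<F> (transduce (tp (hat X) (\<lambda>c. [c]) [pos_letter z] (\<lambda>c. [])) 0 {1} ?L)"
      by (rule tr[OF tp_finite[OF fX] f1 FL])
    then have A: "\<F> {u @ [pos_letter z] | u u2. u @ u2 \<in> ?L}"
      by (simp only: transduce_pref[OF Lletters])
    have "\<F> (transduce (tp (hat X) (\<lambda>c. []) [inv_letter z] (\<lambda>c. [c])) 0 {1} ?L)"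
      by (rule tr[OF tp_finite[OF fX] f1 FL])
    then have C: "\<F> {[inv_letter z] @ v | v v1. v1 @ v \<in> ?L}"
      by (simp only: transduce_suff[OF Lletters])
    have f0: "finite {0::nat}" by simp
    have "\<F> (transduce (tB (hat (insert z X))) 0 {0} ?L)"
      by (rule tr[OF tB_finite[OF fY] f0 FL])
    then have B: "\<F> {v. set v \<subseteq> hat (insert z X)}"
      by (simp only: transduce_all[OF Lnil])
    have "\<F> (?L \<union> lang_prod {u @ [pos_letter z] | u u2. u @ u2 \<in> ?L}
      (lang_prod {v. set v \<subseteq> hat (insert z X)} {[inv_letter z] @ v | v v1. v1 @ v \<in> ?L}))"
      by (rule un[OF FL pr[OF A pr[OF B C]]])
    then show "\<F> ?LZ"
      by (simp only: L0_char[OF assms(4) assms(3)])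
  next
    assume F0: "\<F> ?LZ"
    have f1: "finite {1::nat}" by simp
    have "\<F> (transduce (tp (hat X) (\<lambda>c. [c]) [] (\<lambda>c. [c])) 0 {1} ?LZ)"
      by (rule tr[OF tp_finite[OF fX] f1 F0])
    then show "\<F> ?L"
      by (simp only: transduce_id L_restrict[OF assms(4)])
  qed
qed

end
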